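(* Let $(X_j,Y_j,S_j)$, $j\in\mathbb{Z}$, be a FAIM process, and let $\Delta H_n=H_n-\hat H_n$. Then $\lim_{n\to\infty}\mathbb{E}[\Delta H_n]=0$.
   Context: FAIM process: $(X_j,Y_j,S_j)$, $j\in\mathbb{Z}$, is strictly stationary, $X_j\in\{0,1\}$, $Y_j$ takes values in a finite alphabet, $S_j$ in a finite set $\mathcal{S}$; the conditional law $P_{X_j,Y_j,S_j|S_{j-1}}$ does not depend on $j$; and conditioned on $S_{j-1}$, $\{X_k,Y_k,S_k\}_{k\ge j}$ is independent of $\{X_l,Y_l,S_{l-1}\}_{l<j}$. The state sequence $(S_j)$ is a homogeneous, finite-state, stationary, aperiodic and irreducible Markov chain. Polarization setup: $N=2^n$, $G_N=B_NG_2^{\otimes n}$ with $G_2=\begin{bmatrix}1&0\\1&1\end{bmatrix}$ and $B_N$ the bit-reversal permutation matrix (arithmetic mod 2); $U_1^N=X_1^NG_N$, $Q_i=(U_1^{i-1},Y_1^N)$; $B_1,B_2,\dots$ i.i.d. Bernoulli$(1/2)$ and $i-1=\sum_{j=1}^nB_j2^{n-j}$. With $H(\cdot|\cdot)$ the conditional entropy in bits, $H_n=H(U_i|Q_i)$ and $\hat H_n=H(U_i|Q_i,S_N,S_0)$. *)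

theory Defs
  imports "HOL-Probability.Probability"
begin

definition pr :: "'w measure \<Rightarrow> ('w \<Rightarrow> 'a) \<Rightarrow> 'a \<Rightarrow> real" where
  "pr M A a = measure M {w \<in> space M. A w = a}"

definition cond_entropy :: "'w measure \<Rightarrow> ('w \<Rightarrow> 'a) \<Rightarrow> ('w \<Rightarrow> 'b) \<Rightarrow> real" where
  "cond_entropy M A B =
     - (\<Sum>(a, b) \<in> (\<lambda>w. (A w, B w)) ` space M.
          pr M (\<lambda>w. (A w, B w)) (a, b) *
          log 2 (pr M (\<lambda>w. (A w, B w)) (a, b) / pr M B b))"

fun bitrev :: "nat \<Rightarrow> nat \<Rightarrow> nat" where
  "bitrev 0 i = 0"
| "bitrev (Suc n) i = (i mod 2) * 2 ^ n + bitrev n (i div 2)"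

text \<open>Entries of G_2 = [[1,0],[1,1]] (True = 1).\<close>
definition G2 :: "nat \<Rightarrow> nat \<Rightarrow> bool" where
  "G2 r c = (\<not> (r = 0 \<and> c = 1))"

text \<open>Entries of the Kronecker power G_2^{\<otimes>n}, with G_2^{\<otimes>(n+1)} = G_2 \<otimes> G_2^{\<otimes>n}.\<close>
fun kronG2 :: "nat \<Rightarrow> nat \<Rightarrow> nat \<Rightarrow> bool" where
  "kronG2 0 i j = True"
| "kronG2 (Suc n) i j = (G2 (i div 2 ^ n) (j div 2 ^ n) \<and> kronG2 n (i mod 2 ^ n) (j mod 2 ^ n))"

text \<open>Entries of G_N = B_N G_2^{\<otimes>n}; B_N is the bit-reversal permutation matrix.\<close>
definition polarG :: "nat \<Rightarrow> nat \<Rightarrow> nat \<Rightarrow> bool" where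
  "polarG n i j = kronG2 n (bitrev n i) j"

text \<open>Component j (0-indexed) of u = x G_N over GF(2), x given 0-indexed.\<close>
definition polar_u :: "nat \<Rightarrow> (nat \<Rightarrow> bool) \<Rightarrow> nat \<Rightarrow> bool" where
  "polar_u n x j = odd (card {i. i < 2 ^ n \<and> x i \<and> polarG n i j})"

definition ev :: "'w measure \<Rightarrow> ('w \<Rightarrow> bool) \<Rightarrow> real" where
  "ev M P = measure M {w \<in> space M. P w}"

definition FAIM ::
  "'w measure \<Rightarrow> (int \<Rightarrow> 'w \<Rightarrow> bool) \<Rightarrow> (int \<Rightarrow> 'w \<Rightarrow> 'y::finite) \<Rightarrow> (int \<Rightarrow> 'w \<Rightarrow> 's::finite) \<Rightarrow> bool"
where
  "FAIM M X Y S \<longleftrightarrow>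
     prob_space M \<and>
     (\<forall>j. X j \<in> measurable M (count_space UNIV) \<and> Y j \<in> measurable M (count_space UNIV)
          \<and> S j \<in> measurable M (count_space UNIV)) \<and>
     \<comment> \<open>strict stationarity of (X_j, Y_j, S_j)\<close>
     (\<forall>(a::int) (m::nat) v. ev M (\<lambda>w. \<forall>i<m. (X (a + int i) w, Y (a + int i) w, S (a + int i) w) = v i)
                          = ev M (\<lambda>w. \<forall>i<m. (X (int i) w, Y (int i) w, S (int i) w) = v i)) \<and>
     \<comment> \<open>P(X_j,Y_j,S_j | S_{j-1}) does not depend on j (cross-multiplied form)\<close>
     (\<forall>j k x y s s'.
        ev M (\<lambda>w. X j w = x \<and> Y j w = y \<and> S j w = s \<and> S (j - 1) w = s') * ev M (\<lambda>w. S (k - 1) w = s')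
      = ev M (\<lambda>w. X k w = x \<and> Y k w = y \<and> S k w = s \<and> S (k - 1) w = s') * ev M (\<lambda>w. S (j - 1) w = s')) \<and>
     \<comment> \<open>given S_{j-1}, {X_k,Y_k,S_k}_{k\<ge>j} is independent of {X_l,Y_l,S_{l-1}}_{l<j}
         (stated on all finite-dimensional cylinder events)\<close>
     (\<forall>j (m::nat) (n::nat) f g s.
        ev M (\<lambda>w. (\<forall>i<m. (X (j + int i) w, Y (j + int i) w, S (j + int i) w) = f i)
                 \<and> (\<forall>i<n. (X (j - 1 - int i) w, Y (j - 1 - int i) w, S (j - 2 - int i) w) = g i)
                 \<and> S (j - 1) w = s) * ev M (\<lambda>w. S (j - 1) w = s)
      = ev M (\<lambda>w. (\<forall>i<m. (X (j + int i) w, Y (j + int i) w, S (j + int i) w) = f i) \<and> S (j - 1) w = s)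
        * ev M (\<lambda>w. (\<forall>i<n. (X (j - 1 - int i) w, Y (j - 1 - int i) w, S (j - 2 - int i) w) = g i)
                     \<and> S (j - 1) w = s)) \<and>
     \<comment> \<open>the (stationary, homogeneous) state chain is irreducible\<close>
     (\<forall>s s'. \<exists>n::nat. n > 0 \<and> ev M (\<lambda>w. S 0 w = s \<and> S (int n) w = s') > 0) \<and>
     \<comment> \<open>and aperiodic\<close>
     (\<forall>s. Gcd {n::nat. n > 0 \<and> ev M (\<lambda>w. S 0 w = s \<and> S (int n) w = s) > 0} = 1)"

text \<open>U_{k+1} (k 0-indexed), N = 2^n, U_1^N = X_1^N G_N.\<close>
definition Uvar :: "nat \<Rightarrow> (int \<Rightarrow> 'w \<Rightarrow> bool) \<Rightarrow> nat \<Rightarrow> 'w \<Rightarrow> bool" where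
  "Uvar n X k w = polar_u n (\<lambda>i. X (int i + 1) w) k"

text \<open>Q_{k+1} = (U_1^{k}, Y_1^N).\<close>
definition Qvar :: "nat \<Rightarrow> (int \<Rightarrow> 'w \<Rightarrow> bool) \<Rightarrow> (int \<Rightarrow> 'w \<Rightarrow> 'y) \<Rightarrow> nat \<Rightarrow> 'w \<Rightarrow> bool list \<times> 'y list" where
  "Qvar n X Y k w = (map (\<lambda>l. Uvar n X l w) [0..<k], map (\<lambda>l. Y (int l + 1) w) [0..<2 ^ n])"

text \<open>E[H_n] and E[\<hat>H_n]: the index i is uniform on {1..N} since i-1 = \<Sum> B_j 2^{n-j}.\<close>
definition EH :: "'w measure \<Rightarrow> (int \<Rightarrow> 'w \<Rightarrow> bool) \<Rightarrow> (int \<Rightarrow> 'w \<Rightarrow> 'y) \<Rightarrow> nat \<Rightarrow> real" where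
  "EH M X Y n = (\<Sum>k<2 ^ n. cond_entropy M (Uvar n X k) (Qvar n X Y k)) / 2 ^ n"

definition EHhat :: "'w measure \<Rightarrow> (int \<Rightarrow> 'w \<Rightarrow> bool) \<Rightarrow> (int \<Rightarrow> 'w \<Rightarrow> 'y) \<Rightarrow> (int \<Rightarrow> 'w \<Rightarrow> 's) \<Rightarrow> nat \<Rightarrow> real" where
  "EHhat M X Y S n = (\<Sum>k<2 ^ n. cond_entropy M (Uvar n X k)
                         (\<lambda>w. (Qvar n X Y k w, S (2 ^ n) w, S 0 w))) / 2 ^ n"

end

theory Submission
  imports Defs
begin

definition rv :: "'w measure \<Rightarrow> ('w \<Rightarrow> 'a) \<Rightarrow> bool" where
  "rv M f \<longleftrightarrow> finite (f ` space M) \<and> (\<forall>v. {w\<in>space M. f w = v} \<in> sets M)"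

definition ent :: "'w measure \<Rightarrow> ('w \<Rightarrow> 'a) \<Rightarrow> real" where
  "ent M f = - (\<Sum>v\<in>f ` space M. pr M f v * log 2 (pr M f v))"

lemma rv_comp:
  assumes r: "rv M f" shows "rv M (\<lambda>w. h (f w))"
proof -
  have eq: "{w\<in>space M. h (f w) = u} = (\<Union>v\<in>{v\<in>f`space M. h v = u}. {w\<in>space M. f w = v})" for u
    by auto
  have "(\<lambda>w. h (f w)) ` space M = h ` (f ` space M)" by auto
  then show ?thesis using r unfolding rv_def
    by (auto simp: eq intro!: sets.finite_UN)
qed

lemma rv_pair:
  assumes "rv M f" "rv M g" shows "rv M (\<lambda>w. (f w, g w))"
proof -
  have "(\<lambda>w. (f w, g w)) ` space M \<subseteq> f ` space M \<times> g ` space M" by auto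
  moreover have "{w\<in>space M. (f w, g w) = v} = {w\<in>space M. f w = fst v} \<inter> {w\<in>space M. g w = snd v}" for v
    by (cases v) auto
  ultimately show ?thesis using assms unfolding rv_def
    by (auto intro: finite_subset[where B="f ` space M \<times> g ` space M"])
qed

lemma rv_const: "rv M (\<lambda>w. c)"
proof -
  have "{w\<in>space M. c = v} = (if c = v then space M else {})" for v by auto
  then show ?thesis unfolding rv_def by (auto intro: finite_subset)
qed

lemma rv_list:
  "(\<And>i. i \<in> set L \<Longrightarrow> rv M (f i)) \<Longrightarrow> rv M (\<lambda>w. map (\<lambda>i. f i w) L)"
proof (induction L)
  case Nil
  then show ?case using rv_const[of M "[]"] by simp
next
  case (Cons x L)
  have "rv M (\<lambda>w. (\<lambda>(a,l). a # l) (f x w, map (\<lambda>i. f i w) L))"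
    by (rule rv_comp, rule rv_pair) (use Cons in auto)
  then show ?case by simp
qed

lemma rv_finite_type:
  assumes "f \<in> measurable M (count_space UNIV)" shows "rv M (f :: _ \<Rightarrow> 'a::finite)"
proof -
  have "{w\<in>space M. f w = v} = f -` {v} \<inter> space M" for v by auto
  then show ?thesis unfolding rv_def using measurable_sets[OF assms] by auto
qed

context prob_space
begin

lemma pr_comp:
  assumes r: "rv M f"
  shows "pr M (\<lambda>w. h (f w)) u = (\<Sum>v\<in>{v\<in>f`space M. h v = u}. pr M f v)"
proof -
  have eq: "{w\<in>space M. h (f w) = u} = (\<Union>v\<in>{v\<in>f`space M. h v = u}. {w\<in>space M. f w = v})"
    by auto
  show ?thesis unfolding pr_def eq
    using r unfolding rv_def
    by (intro finite_measure_finite_Union) (auto simp: disjoint_family_on_def)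
qed

lemma PF:
  assumes r: "rv M f"
  shows "(\<Sum>v\<in>f`space M. pr M f v * g (h v)) =
         (\<Sum>u\<in>(\<lambda>w. h (f w))`space M. pr M (\<lambda>w. h (f w)) u * g u)"
proof -
  have fin: "finite (f ` space M)" using r unfolding rv_def by auto
  have im: "(\<lambda>w. h (f w)) ` space M = h ` (f ` space M)" by auto
  have "(\<Sum>u\<in>(\<lambda>w. h (f w))`space M. pr M (\<lambda>w. h (f w)) u * g u)
      = (\<Sum>u\<in>h ` (f ` space M). (\<Sum>v\<in>{v\<in>f`space M. h v = u}. pr M f v * g (h v)))"
    unfolding im
    by (rule sum.cong) (auto simp: pr_comp[OF r] sum_distrib_right)
  also have "\<dots> = (\<Sum>v\<in>f`space M. pr M f v * g (h v))"
    by (rule sum.group) (use fin in auto)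
  finally show ?thesis by simp
qed

lemma sum_pr_1:
  assumes r: "rv M f" shows "(\<Sum>v\<in>f`space M. pr M f v) = 1"
proof -
  have "(\<Sum>v\<in>f`space M. pr M f v * (\<lambda>_. 1::real) ((\<lambda>_. ()) v)) =
        (\<Sum>u\<in>(\<lambda>w. ()) ` space M. pr M (\<lambda>w. ()) u * 1)"
    using PF[OF r, of "\<lambda>_. 1::real" "\<lambda>_. ()"] by simp
  also have "(\<lambda>w. ()) ` space M = {()}" using not_empty by auto
  finally show ?thesis using prob_space by (simp add: pr_def)
qed

lemma ent_inj:
  assumes r: "rv M f" and inj: "inj_on h (f ` space M)"
  shows "ent M (\<lambda>w. h (f w)) = ent M f"
proof -
  have pe: "pr M (\<lambda>w. h (f w)) (h v) = pr M f v" if "v \<in> f ` space M" for v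
  proof -
    have "{w\<in>space M. h (f w) = h v} = {w\<in>space M. f w = v}"
      using inj that by (auto dest: inj_onD)
    then show ?thesis unfolding pr_def by simp
  qed
  have "(\<Sum>v\<in>f`space M. pr M f v * log 2 (pr M f v)) =
        (\<Sum>v\<in>f`space M. pr M f v * (\<lambda>u. log 2 (pr M (\<lambda>w. h (f w)) u)) (h v))"
    by (rule sum.cong) (auto simp: pe)
  also have "\<dots> = (\<Sum>u\<in>(\<lambda>w. h (f w))`space M. pr M (\<lambda>w. h (f w)) u * log 2 (pr M (\<lambda>w. h (f w)) u))"
    by (rule PF[OF r])
  finally show ?thesis unfolding ent_def by simp
qed

lemma pr_pair_le:
  assumes "rv M B"
  shows "pr M (\<lambda>w. (A w, B w)) (a, b) \<le> pr M B b"
  unfolding pr_def using assms unfolding rv_def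
  by (intro finite_measure_mono) auto

lemma ce_formula:
  assumes rA: "rv M A" and rB: "rv M B"
  shows "cond_entropy M A B = ent M (\<lambda>w. (A w, B w)) - ent M B"
proof -
  let ?P = "\<lambda>w. (A w, B w)"
  have rP: "rv M ?P" using rv_pair[OF rA rB] .
  have t: "pr M ?P (a, b) * log 2 (pr M ?P (a, b) / pr M B b) =
        pr M ?P (a, b) * log 2 (pr M ?P (a, b)) - pr M ?P (a, b) * log 2 (pr M B b)" for a b
  proof (cases "pr M ?P (a, b) = 0")
    case True then show ?thesis by simp
  next
    case False
    then have p: "pr M ?P (a,b) > 0" unfolding pr_def using measure_nonneg
      by (metis less_eq_real_def)
    then have q: "pr M B b > 0" using pr_pair_le[OF rB, of A a b] by linarith
    show ?thesis using p q by (simp add: log_divide algebra_simps)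
  qed
  have m: "(\<Sum>v\<in>?P`space M. pr M ?P v * log 2 (pr M B (snd v))) =
         (\<Sum>u\<in>B`space M. pr M B u * log 2 (pr M B u))"
    using PF[OF rP, of "\<lambda>b. log 2 (pr M B b)" snd] by simp
  have "cond_entropy M A B = - (\<Sum>v\<in>?P`space M. pr M ?P v * log 2 (pr M ?P v) - pr M ?P v * log 2 (pr M B (snd v)))"
    unfolding cond_entropy_def by (rule arg_cong[where f=uminus], rule sum.cong) (auto simp: t)
  then show ?thesis
    unfolding ent_def by (simp add: sum_subtractf m)
qed

lemma ce_nonneg:
  assumes rB: "rv M B"
  shows "0 \<le> cond_entropy M A B"
proof -
  let ?P = "\<lambda>w. (A w, B w)"
  have "pr M ?P (a, b) * log 2 (pr M ?P (a, b) / pr M B b) \<le> 0" for a b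
  proof (cases "pr M ?P (a, b) = 0")
    case True then show ?thesis by simp
  next
    case False
    then have p: "pr M ?P (a,b) > 0" unfolding pr_def using measure_nonneg
      by (metis less_eq_real_def)
    have le: "pr M ?P (a,b) \<le> pr M B b" using pr_pair_le[OF rB] .
    then have q: "pr M B b > 0" using p by linarith
    have "pr M ?P (a, b) / pr M B b \<le> 1" using le q by simp
    then have "log 2 (pr M ?P (a, b) / pr M B b) \<le> 0" using p q by simp
    then show ?thesis using p by (simp add: mult_nonneg_nonpos)
  qed
  then have "pr M ?P v * log 2 (pr M ?P v / pr M B (snd v)) \<le> 0" for v
    by (cases v) simp
  then show ?thesis unfolding cond_entropy_def
    by (simp add: case_prod_beta sum_nonpos)
qed

lemma ce_upper:
  assumes rA: "rv M A" and rB: "rv M B"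
  shows "cond_entropy M A B \<le> card (A ` space M) / ln 2"
proof -
  let ?P = "\<lambda>w. (A w, B w)"
  have trm: "- (pr M ?P (a, b) * log 2 (pr M ?P (a, b) / pr M B b)) \<le> pr M B b / ln 2" for a b
  proof (cases "pr M ?P (a, b) = 0")
    case True then show ?thesis by (simp add: pr_def)
  next
    case False
    then have p: "pr M ?P (a,b) > 0" unfolding pr_def using measure_nonneg
      by (metis less_eq_real_def)
    have le: "pr M ?P (a,b) \<le> pr M B b" using pr_pair_le[OF rB] .
    then have q: "pr M B b > 0" using p by linarith
    define x where "x = pr M ?P (a,b)"
    define y where "y = pr M B b"
    have xp: "x > 0" "y > 0" "x \<le> y" using p q le by (auto simp: x_def y_def)
    have "ln (y / x) \<le> y / x - 1" using xp by (intro ln_le_minus_one) simp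
    then have "x * ln (y / x) \<le> x * (y / x - 1)" using xp by (intro mult_left_mono) auto
    also have "\<dots> = y - x" using xp by (simp add: field_simps)
    finally have a: "x * ln (y / x) \<le> y" using xp by linarith
    have "- (x * log 2 (x / y)) = x * ln (y / x) / ln 2"
      using xp by (simp add: log_def ln_div field_simps)
    also have "\<dots> \<le> y / ln 2" using a by (intro divide_right_mono) auto
    finally show ?thesis by (simp add: x_def y_def)
  qed
  have fA: "finite (A ` space M)" and fB: "finite (B ` space M)" using rA rB unfolding rv_def by auto
  have "cond_entropy M A B = (\<Sum>(a,b)\<in>?P ` space M. - (pr M ?P (a, b) * log 2 (pr M ?P (a, b) / pr M B b)))"
    unfolding cond_entropy_def by (simp add: sum_negf case_prod_beta)
  also have "\<dots> \<le> (\<Sum>(a,b)\<in>?P ` space M. pr M B b / ln 2)"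
    by (rule sum_mono) (auto simp: trm)
  also have "\<dots> \<le> (\<Sum>(a,b)\<in>A ` space M \<times> B ` space M. pr M B b / ln 2)"
    by (rule sum_mono2) (use fA fB in \<open>auto simp: pr_def\<close>)
  also have "\<dots> = (\<Sum>a\<in>A ` space M. \<Sum>b\<in>B ` space M. pr M B b / ln 2)"
    by (rule sum.cartesian_product[symmetric])
  also have "\<dots> = card (A ` space M) * ((\<Sum>b\<in>B ` space M. pr M B b) / ln 2)"
    by (simp add: sum_divide_distrib)
  also have "\<dots> = card (A ` space M) / ln 2" using sum_pr_1[OF rB] by simp
  finally show ?thesis .
qed


lemma delta:
  assumes rU: "rv M U" and rQ: "rv M Q" and rZ: "rv M Z" and inj: "inj h"
    and Q': "\<And>w. Q' w = h (U w, Q w)"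
  shows "cond_entropy M U Q - cond_entropy M U (\<lambda>w. (Q w, Z w))
       = cond_entropy M Z Q - cond_entropy M Z Q'"
proof -
  have Q'e: "Q' = (\<lambda>w. h (U w, Q w))" using Q' by auto
  have rQZ: "rv M (\<lambda>w. (Q w, Z w))" by (rule rv_pair[OF rQ rZ])
  have rUQ: "rv M (\<lambda>w. (U w, Q w))" by (rule rv_pair[OF rU rQ])
  have rUQZ: "rv M (\<lambda>w. (U w, (Q w, Z w)))" by (rule rv_pair[OF rU rQZ])
  have rQ': "rv M Q'" unfolding Q'e by (rule rv_comp[OF rUQ])
  have e1: "ent M (\<lambda>w. (Z w, Q w)) = ent M (\<lambda>w. (Q w, Z w))"
    using ent_inj[OF rQZ, of prod.swap] by simp
  have e2: "ent M (\<lambda>w. (Z w, Q' w)) = ent M (\<lambda>w. (U w, (Q w, Z w)))"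
  proof -
    have inj2: "inj (\<lambda>(u, q, z). (z, h (u, q)))"
      using inj unfolding inj_def by auto
    have "ent M (\<lambda>w. (\<lambda>(u, q, z). (z, h (u, q))) (U w, (Q w, Z w))) = ent M (\<lambda>w. (U w, (Q w, Z w)))"
      by (rule ent_inj[OF rUQZ]) (use inj2 in \<open>auto simp: inj_on_def inj_def\<close>)
    then show ?thesis by (simp add: Q'e)
  qed
  have e3: "ent M Q' = ent M (\<lambda>w. (U w, Q w))"
    unfolding Q'e by (rule ent_inj[OF rUQ]) (use inj in \<open>auto simp: inj_on_def inj_def\<close>)
  show ?thesis
    using ce_formula[OF rU rQ] ce_formula[OF rU rQZ] ce_formula[OF rZ rQ] ce_formula[OF rZ rQ']
      e1 e2 e3 by simp
qed

lemma polar_u_cong: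
  assumes "\<And>i. i < 2 ^ n \<Longrightarrow> x i = x' i"
  shows "polar_u n x k = polar_u n x' k"
proof -
  have "{i. i < 2 ^ n \<and> x i \<and> polarG n i k} = {i. i < 2 ^ n \<and> x' i \<and> polarG n i k}"
    using assms by auto
  then show ?thesis unfolding polar_u_def by simp
qed

lemma rv_Uvar:
  assumes rX: "\<And>j. rv M (X j)"
  shows "rv M (Uvar n X k)"
proof -
  have r: "rv M (\<lambda>w. (\<lambda>xs. polar_u n (\<lambda>i. xs ! i) k) (map (\<lambda>i. X (int i + 1) w) [0..<2^n]))"
    by (rule rv_comp, rule rv_list) (use rX in auto)
  have "Uvar n X k = (\<lambda>w. (\<lambda>xs. polar_u n (\<lambda>i. xs ! i) k) (map (\<lambda>i. X (int i + 1) w) [0..<2^n]))"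
    unfolding Uvar_def by (auto intro!: polar_u_cong)
  then show ?thesis using r by simp
qed

lemma rv_Qvar:
  assumes rX: "\<And>j. rv M (X j)" and rY: "\<And>j. rv M (Y j)"
  shows "rv M (Qvar n X Y k)"
proof -
  have "rv M (\<lambda>w. (map (\<lambda>l. Uvar n X l w) [0..<k], map (\<lambda>l. Y (int l + 1) w) [0..<2 ^ n]))"
    by (intro rv_pair rv_list rv_Uvar) (use rX rY in auto)
  then show ?thesis unfolding Qvar_def[abs_def] by simp
qed

lemma bound_n:
  assumes rX: "\<And>j. rv M (X j)" and rY: "\<And>j. rv M (Y j)" and rZ: "rv M Z"
  shows "\<bar>(\<Sum>k<2^n. cond_entropy M (Uvar n X k) (Qvar n X Y k))
        - (\<Sum>k<2^n. cond_entropy M (Uvar n X k) (\<lambda>w. (Qvar n X Y k w, Z w)))\<bar>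
        \<le> card (Z ` space M) / ln 2"
proof -
  define c where "c k = cond_entropy M Z (Qvar n X Y k)" for k
  have rQ: "rv M (Qvar n X Y k)" for k by (rule rv_Qvar[OF rX rY])
  have d: "cond_entropy M (Uvar n X k) (Qvar n X Y k)
           - cond_entropy M (Uvar n X k) (\<lambda>w. (Qvar n X Y k w, Z w)) = c k - c (Suc k)" for k
    unfolding c_def
  proof (rule delta[OF rv_Uvar[OF rX] rQ rZ, where h="\<lambda>(u, us, ys). (us @ [u], ys)"])
    show "inj (\<lambda>(u::bool, us::bool list, ys::'y list). (us @ [u], ys))"
      unfolding inj_def by auto
    show "Qvar n X Y (Suc k) w = (\<lambda>(u, us, ys). (us @ [u], ys)) (Uvar n X k w, Qvar n X Y k w)" for w
      unfolding Qvar_def by simp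
  qed
  have "(\<Sum>k<2^n. cond_entropy M (Uvar n X k) (Qvar n X Y k))
        - (\<Sum>k<2^n. cond_entropy M (Uvar n X k) (\<lambda>w. (Qvar n X Y k w, Z w)))
        = (\<Sum>k<2^n. c k - c (Suc k))"
    by (simp add: sum_subtractf[symmetric] d)
  also have "\<dots> = c 0 - c (2^n)" by (rule sum_lessThan_telescope')
  finally have eq: "(\<Sum>k<2^n. cond_entropy M (Uvar n X k) (Qvar n X Y k))
        - (\<Sum>k<2^n. cond_entropy M (Uvar n X k) (\<lambda>w. (Qvar n X Y k w, Z w))) = c 0 - c (2^n)" .
  have b: "0 \<le> c k \<and> c k \<le> card (Z ` space M) / ln 2" for k
    unfolding c_def using ce_nonneg[OF rQ] ce_upper[OF rZ rQ] by auto
  show ?thesis unfolding eq using b[of 0] b[of "2^n"] by linarith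
qed
end

theorem lemma6:
  fixes M :: "'w measure"
    and X :: "int \<Rightarrow> 'w \<Rightarrow> bool"
    and Y :: "int \<Rightarrow> 'w \<Rightarrow> 'y::finite"
    and S :: "int \<Rightarrow> 'w \<Rightarrow> 's::finite"
  assumes "FAIM M X Y S"
  shows "(\<lambda>n. EH M X Y n - EHhat M X Y S n) \<longlonglongrightarrow> 0"
proof -
  have ps: "prob_space M" and meas: "\<And>j. X j \<in> measurable M (count_space UNIV) \<and> Y j \<in> measurable M (count_space UNIV)
          \<and> S j \<in> measurable M (count_space UNIV)"
    using assms unfolding FAIM_def by auto
  interpret prob_space M by (rule ps)
  have rX: "\<And>j. rv M (X j)" and rY: "\<And>j. rv M (Y j)" and rS: "\<And>j. rv M (S j)"
    using meas by (auto intro: rv_finite_type)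
  define K where "K = real (CARD('s \<times> 's)) / ln 2"
  have bnd: "norm (EH M X Y n - EHhat M X Y S n) \<le> K * (1/2)^n" for n
  proof -
    let ?Z = "\<lambda>w. (S (2^n) w, S 0 w)"
    have rZ: "rv M ?Z" by (rule rv_pair[OF rS rS])
    have cZ: "card (?Z ` space M) \<le> CARD('s \<times> 's)"
      by (rule card_mono) simp_all
    have b: "\<bar>(\<Sum>k<2^n. cond_entropy M (Uvar n X k) (Qvar n X Y k))
        - (\<Sum>k<2^n. cond_entropy M (Uvar n X k) (\<lambda>w. (Qvar n X Y k w, ?Z w)))\<bar> \<le> K"
    proof -
      have "real (card (?Z ` space M)) / ln 2 \<le> K"
        unfolding K_def using cZ by (intro divide_right_mono) (simp_all only: of_nat_le_iff, simp)
      then show ?thesis using bound_n[where X=X and Y=Y and Z="?Z" and n=n, OF rX rY rZ] by linarith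
    qed
    have "EH M X Y n - EHhat M X Y S n = ((\<Sum>k<2^n. cond_entropy M (Uvar n X k) (Qvar n X Y k))
        - (\<Sum>k<2^n. cond_entropy M (Uvar n X k) (\<lambda>w. (Qvar n X Y k w, ?Z w)))) / 2^n"
      unfolding EH_def EHhat_def by (simp add: diff_divide_distrib)
    then have "norm (EH M X Y n - EHhat M X Y S n) \<le> K / 2^n"
      using b by (simp add: divide_right_mono)
    then show ?thesis by (simp add: power_one_over)
  qed
  have "(\<lambda>n. K * (1/2::real)^n) \<longlonglongrightarrow> 0"
    by (intro tendsto_mult_right_zero LIMSEQ_power_zero) simp
  then show ?thesis
    by (rule Lim_null_comparison[rotated]) (use bnd in auto)
qed

end
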